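(* Let $d \ge 1$ and $\rho \ge 0$ be integers. For every collection of $\rho$ pairwise incomparable points $r^{(1)}, \dots, r^{(\rho)} \in (0,1)^d$ whose $d\rho$ coordinates are all distinct, the number $\gamma$ of generators of their record-setting region satisfies $\gamma \ge (d-1)\rho + 1$. Moreover, for every $d\ge 1$ and $\rho \ge 0$ for which such a collection of $\rho$ points exists, there is such a collection with $\gamma = (d-1)\rho + 1$; thus $(d-1)\rho+1$ is the smallest possible number of generators.
   Context: For $x,y \in \mathbb{R}^d$, $x \prec y$ means $x_j < y_j$ for all $j \in [d]$, and $x \le y$ means $x_j \le y_j$ for all $j$; points are incomparable if neither is $\le$ the other. The record-setting region of points $r^{(1)},\dots,r^{(\rho)}$ is $S := \{x \in [0,1)^d : x \not\prec r^{(i)} \text{ for all } i \in [\rho]\}$ (so for $\rho=0$, $S=[0,1)^d$), and its generators are the minimal elements of $S$ with respect to $\le$. *)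

theory Defs
  imports "HOL-Analysis.Analysis"
begin

text \<open>Points of R^d are vectors real^'n, with d = CARD('n).\<close>

definition vle :: "real^'n \<Rightarrow> real^'n \<Rightarrow> bool" where
  "vle x y \<longleftrightarrow> (\<forall>j. x $ j \<le> y $ j)"

definition vlt :: "real^'n \<Rightarrow> real^'n \<Rightarrow> bool" where
  "vlt x y \<longleftrightarrow> (\<forall>j. x $ j < y $ j)"

definition record_region :: "nat \<Rightarrow> (nat \<Rightarrow> real^'n) \<Rightarrow> (real^'n) set" where
  "record_region rho r =
     {x. (\<forall>j. 0 \<le> x $ j \<and> x $ j < 1) \<and> (\<forall>i<rho. \<not> vlt x (r i))}"

definition generators :: "(real^'n) set \<Rightarrow> (real^'n) set" where
  "generators S = {x \<in> S. \<forall>y\<in>S. vle y x \<longrightarrow> y = x}"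

definition admissible :: "nat \<Rightarrow> (nat \<Rightarrow> real^'n) \<Rightarrow> bool" where
  "admissible rho r \<longleftrightarrow>
     (\<forall>i<rho. \<forall>j. 0 < r i $ j \<and> r i $ j < 1) \<and>
     (\<forall>i<rho. \<forall>i'<rho. i \<noteq> i' \<longrightarrow> \<not> vle (r i) (r i')) \<and>
     (\<forall>i<rho. \<forall>i'<rho. \<forall>j j'. (i, j) \<noteq> (i', j') \<longrightarrow> r i $ j \<noteq> r i' $ j')"

end

theory Submission
  imports Defs
begin

lemma mem_R: "x \<in> record_region rho r \<longleftrightarrow>
   (\<forall>j. 0 \<le> x$j \<and> x$j < 1) \<and> (\<forall>i<rho. \<exists>j. r i $ j \<le> x $ j)"
  by (auto simp: record_region_def vlt_def not_less)

lemma gen_iff: "x \<in> generators S \<longleftrightarrow> x \<in> S \<and> (\<forall>y\<in>S. vle y x \<longrightarrow> y = x)"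
  by (auto simp: generators_def)

lemma Max0_ge: "finite A \<Longrightarrow> a \<in> A \<Longrightarrow> (f a::real) \<le> Max (insert 0 (f ` A))"
  by (simp add: Max_ge_iff)
lemma Max0_nonneg: "finite A \<Longrightarrow> (0::real) \<le> Max (insert 0 (f ` A))"
  by (simp add: Max_ge_iff)
lemma Max0_in: "finite A \<Longrightarrow> Max (insert 0 (f ` A)) \<in> insert (0::real) (f ` A)"
  by (rule Max_in) auto
lemma Max0_less: "finite A \<Longrightarrow> (\<forall>a\<in>A. f a < t) \<Longrightarrow> (0::real) < t \<Longrightarrow> Max (insert 0 (f ` A)) < t"
  by (simp add: Max_less_iff)
lemma Max0_le: "finite A \<Longrightarrow> (\<forall>a\<in>A. f a \<le> t) \<Longrightarrow> (0::real) \<le> t \<Longrightarrow> Max (insert 0 (f ` A)) \<le> t"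
  by (simp add: Max_le_iff)

definition Vs :: "nat \<Rightarrow> (nat \<Rightarrow> real^'n) \<Rightarrow> 'n \<Rightarrow> real set" where
  "Vs rho r j = insert 0 ((\<lambda>i. r i $ j) ` {..<rho})"

definition grid :: "nat \<Rightarrow> (nat \<Rightarrow> real^'n) \<Rightarrow> (real^'n) set" where
  "grid rho r = {x. \<forall>j. x $ j \<in> Vs rho r j}"

definition rdn :: "nat \<Rightarrow> (nat \<Rightarrow> real^'n) \<Rightarrow> real^'n \<Rightarrow> real^'n" where
  "rdn rho r x = (\<chi> j. Max (insert 0 ((\<lambda>i. r i $ j) ` {i. i < rho \<and> r i $ j \<le> x $ j})))"

lemma finite_grid: "finite (grid rho r)"
proof -
  have fin: "finite (Pi\<^sub>E UNIV (Vs rho r))"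
    by (rule finite_PiE) (auto simp: Vs_def)
  have "grid rho r \<subseteq> (\<lambda>f. \<chi> j. f j) ` (Pi\<^sub>E UNIV (Vs rho r))"
  proof
    fix x assume "x \<in> grid rho r"
    then have "(\<lambda>j. x $ j) \<in> Pi\<^sub>E UNIV (Vs rho r)" by (auto simp: grid_def)
    moreover have "x = (\<chi> j. (\<lambda>j. x $ j) j)" by simp
    ultimately show "x \<in> (\<lambda>f. \<chi> j. f j) ` (Pi\<^sub>E UNIV (Vs rho r))" by blast
  qed
  then show ?thesis using fin finite_subset by blast
qed

lemma rdn_comp: "rdn rho r x $ j = Max (insert 0 ((\<lambda>i. r i $ j) ` {i. i < rho \<and> r i $ j \<le> x $ j}))"
  by (simp add: rdn_def)

lemma rdn_nonneg: "0 \<le> rdn rho r x $ j"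
  unfolding rdn_comp by (rule Max0_nonneg) auto

lemma rdn_le: "0 \<le> x $ j \<Longrightarrow> rdn rho r x $ j \<le> x $ j"
  unfolding rdn_comp by (rule Max0_le) auto

lemma rdn_ge: "i < rho \<Longrightarrow> r i $ j \<le> x $ j \<Longrightarrow> r i $ j \<le> rdn rho r x $ j"
  unfolding rdn_comp by (rule Max0_ge[where f="\<lambda>i. r i $ j"]) auto

lemma rdn_mono: "x $ j \<le> y $ j \<Longrightarrow> rdn rho r x $ j \<le> rdn rho r y $ j"
  unfolding rdn_comp by (rule Max_mono) auto

lemma rdn_grid: "rdn rho r x \<in> grid rho r"
proof -
  have "rdn rho r x $ j \<in> Vs rho r j" for j
    using Max0_in[of "{i. i < rho \<and> r i $ j \<le> x $ j}" "\<lambda>i. r i $ j"]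
    unfolding rdn_comp Vs_def by auto
  then show ?thesis by (auto simp: grid_def)
qed

lemma rdn_id_comp: assumes a: "x $ j \<in> Vs rho r j" "0 \<le> x $ j"
  shows "rdn rho r x $ j = x $ j"
  unfolding rdn_comp
proof (rule Max_eqI)
  show "x $ j \<in> insert 0 ((\<lambda>i. r i $ j) ` {i. i < rho \<and> r i $ j \<le> x $ j})"
    using a(1) unfolding Vs_def by auto
qed (use a in auto)

lemma rdn_R: assumes xR: "x \<in> record_region rho r" shows "rdn rho r x \<in> record_region rho r"
proof -
  have h: "\<forall>j. 0 \<le> x $ j \<and> x $ j < 1" "\<forall>i<rho. \<exists>j. r i $ j \<le> x $ j" using xR unfolding mem_R by auto
  have "0 \<le> rdn rho r x $ j \<and> rdn rho r x $ j < 1" for j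
  proof -
    have "0 \<le> x $ j" "x $ j < 1" using h by auto
    then show ?thesis using rdn_nonneg[of rho r x j] rdn_le[of x j rho r] by linarith
  qed
  moreover have "\<exists>j. r i $ j \<le> rdn rho r x $ j" if "i < rho" for i
    using h(2) that rdn_ge by blast
  ultimately show ?thesis unfolding mem_R by blast
qed

lemma sum_strict: "vle y z \<Longrightarrow> y \<noteq> z \<Longrightarrow> (\<Sum>j\<in>UNIV. y $ j) < (\<Sum>j\<in>UNIV. z $ j)"
  apply (rule sum_strict_mono_ex1)
    apply (auto simp: vle_def vec_eq_iff)
  by (meson less_eq_real_def)

lemma vle_refl: "vle x x" by (simp add: vle_def)
lemma vle_trans: "vle x y \<Longrightarrow> vle y z \<Longrightarrow> vle x z" by (meson order_trans vle_def)
lemma vle_antisym: "vle x y \<Longrightarrow> vle y x \<Longrightarrow> x = y" by (simp add: vle_def vec_eq_iff order_antisym)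

lemma rdn_id: "x \<in> grid rho r \<Longrightarrow> \<forall>j. 0 \<le> x $ j \<Longrightarrow> rdn rho r x = x"
  by (simp add: vec_eq_iff rdn_id_comp grid_def)

lemma rdn_vle: "\<forall>j. 0 \<le> x $ j \<Longrightarrow> vle (rdn rho r x) x"
  by (simp add: vle_def rdn_le)

lemma rdn_vmono: "vle x y \<Longrightarrow> vle (rdn rho r x) (rdn rho r y)"
  by (simp add: vle_def rdn_mono)

lemma min_exists:
  assumes Cr: "\<And>x. C x \<Longrightarrow> x \<in> record_region rho r \<Longrightarrow> C (rdn rho r x)"
  and xR: "x \<in> record_region rho r" "C x"
  shows "\<exists>z. z \<in> record_region rho r \<and> C z \<and> vle z x \<and>
     (\<forall>y. y \<in> record_region rho r \<longrightarrow> C y \<longrightarrow> vle y z \<longrightarrow> y = z)"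
proof -
  define R where "R = record_region rho r"
  define sv :: "real^'a \<Rightarrow> real" where "sv w = (\<Sum>j\<in>UNIV. w $ j)" for w
  define F where "F = {w \<in> grid rho r. w \<in> R \<and> C w \<and> vle w (rdn rho r x)}"
  have nn: "\<forall>j. 0 \<le> w $ j" if "w \<in> R" for w using that unfolding R_def mem_R by auto
  have finF: "finite F" unfolding F_def using finite_grid by (rule finite_subset[rotated]) auto
  have xF: "rdn rho r x \<in> F" unfolding F_def R_def
    using rdn_grid rdn_R[OF xR(1)] Cr[OF xR(2) xR(1)] vle_refl by blast
  then have Fne: "F \<noteq> {}" by auto
  obtain z where zF: "z \<in> F" and zmin: "sv z = Min (sv ` F)"
  proof -
    have "Min (sv ` F) \<in> sv ` F" using Min_in[of "sv ` F"] finF Fne by auto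
    then show ?thesis using that by auto
  qed
  have zle: "\<And>w. w \<in> F \<Longrightarrow> sv z \<le> sv w" using zmin finF by simp
  have zR: "z \<in> R" "C z" "z \<in> grid rho r" "vle z (rdn rho r x)" using zF F_def by auto
  have zx: "vle z x" using zR(4) rdn_vle[OF nn[OF xR(1)[folded R_def]]] vle_trans by blast
  have rz: "rdn rho r z = z" using rdn_id zR(3) nn[OF zR(1)] by blast
  have "y = z" if yR: "y \<in> R" "C y" "vle y z" for y
  proof -
    define w where "w = rdn rho r y"
    have wz: "vle w z" using rdn_vmono[OF yR(3), of rho r] rz w_def by simp
    have wF: "w \<in> F" unfolding F_def
    proof (intro CollectI conjI)
      show "w \<in> grid rho r" unfolding w_def by (rule rdn_grid)
      show "w \<in> R" using yR(1) rdn_R unfolding R_def w_def by blast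
      show "C w" using Cr yR(1,2) unfolding R_def w_def by blast
      show "vle w (rdn rho r x)"
        using vle_trans[OF wz zR(4)] .
    qed
    have "w = z"
    proof (rule ccontr)
      assume "w \<noteq> z"
      then have "sv w < sv z" using sum_strict[OF wz] sv_def by simp
      with zle[OF wF] show False by simp
    qed
    moreover have "vle w y" using w_def rdn_vle nn[OF yR(1)] by blast
    ultimately show "y = z" using yR(3) vle_antisym by blast
  qed
  then show ?thesis using zR zx unfolding R_def by blast
qed

lemma upward: assumes "x \<in> record_region rho r" "vle x y" "\<forall>j. y $ j < 1"
  shows "y \<in> record_region rho r"
proof -
  have a: "\<forall>j. 0 \<le> x $ j" "\<forall>i<rho. \<exists>j. r i $ j \<le> x $ j" "\<forall>j. x $ j \<le> y $ j"
    using assms(1,2) unfolding mem_R vle_def by auto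
  have "0 \<le> y $ j" for j using a(1,3) order_trans by blast
  moreover have "\<exists>j. r i $ j \<le> y $ j" if "i < rho" for i
    using a(2,3) that order_trans by blast
  ultimately show ?thesis unfolding mem_R using assms(3) by blast
qed

lemma gen_below: assumes "x \<in> record_region rho r" shows "\<exists>g \<in> generators (record_region rho r). vle g x"
proof -
  obtain z where z: "z \<in> record_region rho r" "vle z x"
     "\<forall>y. y \<in> record_region rho r \<longrightarrow> vle y z \<longrightarrow> y = z"
    using min_exists[of "\<lambda>_. True" rho r x] assms by auto
  then have "z \<in> generators (record_region rho r)" unfolding gen_iff by blast
  then show ?thesis using z(2) by blast
qed

lemma witness:
  assumes zR: "z \<in> record_region rho r" and pos: "0 < z $ k"
  and zmin: "\<And>y. y \<in> record_region rho r \<Longrightarrow> vle y z \<Longrightarrow> (\<forall>l. l \<noteq> k \<longrightarrow> y $ l = z $ l) \<Longrightarrow> y = z"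
  shows "\<exists>i<rho. z $ k = r i $ k \<and> (\<forall>l. l \<noteq> k \<longrightarrow> z $ l < r i $ l)"
proof (rule ccontr)
  assume nw: "\<not> ?thesis"
  define A where "A = {i. i < rho \<and> r i $ k < z $ k}"
  define v where "v = Max (insert 0 ((\<lambda>i. r i $ k) ` A))"
  have finA: "finite A" unfolding A_def by auto
  have v0: "0 \<le> v" unfolding v_def using Max0_nonneg[OF finA] .
  have vlt: "v < z $ k" unfolding v_def using Max0_less[OF finA, of "\<lambda>i. r i $ k"] pos A_def by auto
  have vge: "r i $ k \<le> v" if "i < rho" "r i $ k < z $ k" for i
    unfolding v_def using Max0_ge[OF finA, of i "\<lambda>i. r i $ k"] that A_def by auto
  define y where "y = (\<chi> l. if l = k then v else z $ l)"
  have zc: "\<forall>j. 0 \<le> z $ j \<and> z $ j < 1" "\<forall>i<rho. \<exists>j. r i $ j \<le> z $ j" using zR unfolding mem_R by auto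
  have yR: "y \<in> record_region rho r" unfolding mem_R
  proof (intro conjI allI impI)
    fix j have "z $ k < 1" using zc(1) by blast
    then have v1: "v < 1" using vlt by linarith
    show "0 \<le> y $ j" "y $ j < 1" using zc(1) v0 v1 unfolding y_def by auto
  next
    fix i assume i: "i < rho"
    obtain j where j: "r i $ j \<le> z $ j" using zc(2) i by blast
    show "\<exists>j. r i $ j \<le> y $ j"
    proof (cases "j = k")
      case False then show ?thesis using j unfolding y_def by (intro exI[of _ j]) auto
    next
      case True
      show ?thesis
      proof (cases "r i $ k < z $ k")
        case True then show ?thesis using vge i unfolding y_def by (intro exI[of _ k]) auto
      next
        case False
        then have "z $ k = r i $ k" using j \<open>j = k\<close> by auto
        then obtain l where "l \<noteq> k" "\<not> z $ l < r i $ l" using nw i by blast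
        then show ?thesis unfolding y_def by (intro exI[of _ l]) auto
      qed
    qed
  qed
  have "vle y z" unfolding vle_def y_def using vlt by auto
  moreover have "\<forall>l. l \<noteq> k \<longrightarrow> y $ l = z $ l" unfolding y_def by auto
  ultimately have "y = z" using zmin yR by blast
  moreover have "y $ k = v" unfolding y_def by simp
  ultimately show False using vlt by simp
qed

lemma gens_grid: "generators (record_region rho r) \<subseteq> grid rho r"
proof
  fix x assume xg: "x \<in> generators (record_region rho r)"
  then have xR: "x \<in> record_region rho r" and xm: "\<forall>y\<in>record_region rho r. vle y x \<longrightarrow> y = x"
    unfolding gen_iff by auto
  have "x $ k \<in> Vs rho r k" for k
  proof (cases "x $ k = 0")
    case True then show ?thesis by (simp add: Vs_def)
  next
    case False
    have "0 \<le> x $ k" using xR unfolding mem_R by blast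
    then have "0 < x $ k" using False by linarith
    then obtain i where "i < rho" "x $ k = r i $ k" using witness[OF xR, of k] xm by blast
    then show ?thesis by (simp add: Vs_def)
  qed
  then show "x \<in> grid rho r" by (simp add: grid_def)
qed

lemma finite_gens: "finite (generators (record_region rho r))"
  using finite_subset[OF gens_grid finite_grid] .

lemma adm_rin: "admissible rho r \<Longrightarrow> i < rho \<Longrightarrow> 0 < r i $ l \<and> r i $ l < 1"
  unfolding admissible_def by simp
lemma adm_incomp: "admissible rho r \<Longrightarrow> i < rho \<Longrightarrow> i' < rho \<Longrightarrow> i \<noteq> i' \<Longrightarrow> \<not> vle (r i) (r i')"
  unfolding admissible_def by simp
lemma adm_dist: "admissible rho r \<Longrightarrow> i < rho \<Longrightarrow> i' < rho \<Longrightarrow> (i, l) \<noteq> (i', l') \<Longrightarrow> r i $ l \<noteq> r i' $ l'"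
  unfolding admissible_def by simp

lemma keyA:
  assumes adm: "admissible rho r" and m: "m < rho" and jj: "j \<noteq> j0"
  shows "\<exists>g \<in> generators (record_region rho r). g $ j = r m $ j \<and>
     (\<forall>k. k \<noteq> j0 \<longrightarrow> 0 < g $ k \<longrightarrow> (\<exists>i<rho. g $ k = r i $ k \<and> r m $ j0 \<le> r i $ j0)) \<and>
     (\<forall>k. k \<noteq> j \<longrightarrow> k \<noteq> j0 \<longrightarrow> g $ k < r m $ k)"
proof -
  define R where "R = record_region rho r"
  note rin = adm_rin[OF adm] and incomp = adm_incomp[OF adm]
  define H where "H = {i. i < rho \<and> r i $ j0 < r m $ j0}"
  define h where "h = Max (insert 0 ((\<lambda>i. r i $ j0) ` H))"
  have finH: "finite H" unfolding H_def by auto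
  have h0: "0 \<le> h" unfolding h_def using Max0_nonneg[OF finH] .
  have hlt: "h < r m $ j0" unfolding h_def using Max0_less[OF finH, of "\<lambda>i. r i $ j0"] rin[OF m] H_def by auto
  have hge: "r i $ j0 \<le> h" if "i < rho" "r i $ j0 < r m $ j0" for i
    unfolding h_def using Max0_ge[OF finH, of i "\<lambda>i. r i $ j0"] that H_def by auto
  have hV: "h \<in> Vs rho r j0" unfolding h_def Vs_def using Max0_in[OF finH, of "\<lambda>i. r i $ j0"] H_def by auto
  define A where "A k = {i. i < rho \<and> r i $ k < r m $ k}" for k
  define mk where "mk k = Max (insert 0 ((\<lambda>i. r i $ k) ` A k))" for k
  have finA: "finite (A k)" for k unfolding A_def by auto
  have mk0: "0 \<le> mk k" for k unfolding mk_def using Max0_nonneg[OF finA] .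
  have mklt: "mk k < r m $ k" for k unfolding mk_def using Max0_less[OF finA, of k "\<lambda>i. r i $ k"] rin[OF m] A_def by auto
  have mkge: "r i $ k \<le> mk k" if "i < rho" "r i $ k < r m $ k" for i k
    unfolding mk_def using Max0_ge[OF finA, of i k "\<lambda>i. r i $ k"] that A_def by auto
  define x0 where "x0 = (\<chi> l. if l = j0 then h else if l = j then r m $ j else mk l)"
  define C where "C x \<longleftrightarrow> x $ j0 = h \<and> x $ j \<le> r m $ j \<and> (\<forall>k. k \<noteq> j \<longrightarrow> k \<noteq> j0 \<longrightarrow> x $ k < r m $ k)" for x :: "real^'a"
  have x0R: "x0 \<in> R" unfolding R_def mem_R
  proof (intro conjI allI impI)
    fix l
    have "r m $ j0 < 1" "0 < r m $ j" "r m $ j < 1" "r m $ l < 1" using rin[OF m] by auto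
    then show "0 \<le> x0 $ l" "x0 $ l < 1" unfolding x0_def using h0 hlt mk0[of l] mklt[of l] by auto
  next
    fix i assume i: "i < rho"
    show "\<exists>l. r i $ l \<le> x0 $ l"
    proof (cases "r i $ j0 < r m $ j0")
      case True then show ?thesis using hge i unfolding x0_def by (intro exI[of _ j0]) auto
    next
      case False
      show ?thesis
      proof (cases "i = m")
        case True then show ?thesis using jj unfolding x0_def by (intro exI[of _ j]) auto
      next
        case False
        then obtain l where l: "r i $ l < r m $ l" using incomp[OF m i] unfolding vle_def by (auto simp: not_le)
        then have "l \<noteq> j0" using \<open>\<not> r i $ j0 < r m $ j0\<close> by auto
        then show ?thesis
        proof (cases "l = j")
          case True then show ?thesis using l jj unfolding x0_def by (intro exI[of _ j]) auto
        next
          case False then show ?thesis using l \<open>l \<noteq> j0\<close> mkge[OF i l] unfolding x0_def by (intro exI[of _ l]) auto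
        qed
      qed
    qed
  qed
  have Cx0: "C x0" unfolding C_def x0_def using jj mklt by auto
  have Crdn: "C (rdn rho r x)" if "C x" "x \<in> record_region rho r" for x
  proof -
    have nn: "\<forall>l. 0 \<le> x $ l" using that(2) unfolding mem_R by auto
    have "rdn rho r x $ j0 = h" using rdn_id_comp[of x j0 rho r] that(1) hV h0 unfolding C_def by auto
    moreover have le: "rdn rho r x $ l \<le> x $ l" for l using rdn_le nn by blast
    moreover have "rdn rho r x $ j \<le> r m $ j" using le[of j] that(1) unfolding C_def by linarith
    moreover have "rdn rho r x $ k < r m $ k" if "k \<noteq> j" "k \<noteq> j0" for k
      using le[of k] \<open>C x\<close> that unfolding C_def by force
    ultimately show ?thesis unfolding C_def by blast
  qed
  obtain z where zR: "z \<in> R" and Cz: "C z" and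
    zmin: "\<forall>y. y \<in> R \<longrightarrow> C y \<longrightarrow> vle y z \<longrightarrow> y = z"
    using min_exists[of C rho r x0, OF Crdn] x0R Cx0 unfolding R_def by blast
  have zc: "\<forall>l. 0 \<le> z $ l \<and> z $ l < 1" "\<forall>i<rho. \<exists>l. r i $ l \<le> z $ l" using zR unfolding R_def mem_R by auto
  have zj: "z $ j = r m $ j"
  proof -
    obtain l where l: "r m $ l \<le> z $ l" using zc(2) m by blast
    have "l = j"
    proof (rule ccontr)
      assume "l \<noteq> j"
      show False
      proof (cases "l = j0")
        case True then show False using l Cz hlt unfolding C_def by auto
      next
        case False
        then have "z $ l < r m $ l" using Cz \<open>l \<noteq> j\<close> unfolding C_def by blast
        then show False using l by linarith
      qed
    qed
    then have "z $ j \<le> r m $ j" "r m $ j \<le> z $ j" using l Cz unfolding C_def by auto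
    then show ?thesis by linarith
  qed
  have zw: "\<exists>i<rho. z $ k = r i $ k \<and> r m $ j0 \<le> r i $ j0" if "k \<noteq> j0" "0 < z $ k" for k
  proof -
    have "\<exists>i<rho. z $ k = r i $ k \<and> (\<forall>l. l \<noteq> k \<longrightarrow> z $ l < r i $ l)"
    proof (rule witness[of z rho r k])
      show "z \<in> record_region rho r" using zR R_def by simp
      show "0 < z $ k" by fact
      fix y assume y: "y \<in> record_region rho r" "vle y z" "\<forall>l. l \<noteq> k \<longrightarrow> y $ l = z $ l"
      have "C y" unfolding C_def
      proof (intro conjI allI impI)
        have "j0 \<noteq> k" using that(1) by simp
        then have "y $ j0 = z $ j0" using y(3) by blast
        then show "y $ j0 = h" using Cz unfolding C_def by simp
        have "y $ j \<le> z $ j" using y(2) unfolding vle_def by blast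
        then show "y $ j \<le> r m $ j" using zj by linarith
        fix k' assume "k' \<noteq> j" "k' \<noteq> j0"
        then have "z $ k' < r m $ k'" using Cz unfolding C_def by blast
        moreover have "y $ k' \<le> z $ k'" using y(2) unfolding vle_def by blast
        ultimately show "y $ k' < r m $ k'" by linarith
      qed
      moreover have "y \<in> R" using y(1) R_def by simp
      ultimately show "y = z" using zmin y(2) by blast
    qed
    then obtain i where i: "i < rho" "z $ k = r i $ k" "\<forall>l. l \<noteq> k \<longrightarrow> z $ l < r i $ l" by blast
    have i3: "z $ j0 < r i $ j0" using i(3) that(1) by auto
    have "r m $ j0 \<le> r i $ j0"
    proof (rule ccontr)
      assume "\<not> r m $ j0 \<le> r i $ j0"
      then have "r i $ j0 \<le> h" using hge i(1) by auto
      then show False using i3 Cz unfolding C_def by auto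
    qed
    then show ?thesis using i by blast
  qed
  obtain g where gG: "g \<in> generators R" and gz: "vle g z" using gen_below zR unfolding R_def by blast
  have gR: "g \<in> R" using gG unfolding gen_iff by auto
  have gm: "\<forall>y\<in>R. vle y g \<longrightarrow> y = g" using gG unfolding gen_iff by auto
  define g' where "g' = (\<chi> l. if l = j0 then h else g $ l)"
  have gj0: "g $ j0 \<le> h" using gz Cz unfolding vle_def C_def by auto
  have gc: "\<forall>l. 0 \<le> g $ l \<and> g $ l < 1" using gR unfolding R_def mem_R by auto
  have h1: "h < 1" using hlt rin[OF m] by (meson less_trans)
  have g'R: "g' \<in> R" unfolding R_def
  proof (rule upward)
    show "g \<in> record_region rho r" using gR R_def by simp
    show "vle g g'" unfolding vle_def g'_def using gj0 by auto
    show "\<forall>l. g' $ l < 1" unfolding g'_def using gc h1 by auto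
  qed
  have g'z: "vle g' z" unfolding vle_def g'_def using gz Cz unfolding vle_def C_def by auto
  have "C g'" unfolding C_def
  proof (intro conjI allI impI)
    show "g' $ j0 = h" unfolding g'_def by simp
    have "g' $ j \<le> z $ j" using g'z unfolding vle_def by blast
    then show "g' $ j \<le> r m $ j" using zj by linarith
    fix k' assume "k' \<noteq> j" "k' \<noteq> j0"
    then have "z $ k' < r m $ k'" using Cz unfolding C_def by blast
    moreover have "g' $ k' \<le> z $ k'" using g'z unfolding vle_def by blast
    ultimately show "g' $ k' < r m $ k'" by linarith
  qed
  then have "g' = z" using zmin g'R g'z by blast
  then have gzeq: "g $ l = z $ l" if "l \<noteq> j0" for l
  proof -
    have "g' $ l = g $ l" using that unfolding g'_def by simp
    then show ?thesis using \<open>g' = z\<close> by simp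
  qed
  show ?thesis
  proof (intro bexI conjI allI impI)
    show "g \<in> generators (record_region rho r)" using gG R_def by simp
    show "g $ j = r m $ j" using gzeq[OF jj] zj by simp
    fix k assume "k \<noteq> j0" "0 < g $ k"
    then show "\<exists>i<rho. g $ k = r i $ k \<and> r m $ j0 \<le> r i $ j0" using zw gzeq by simp
  next
    fix k assume "k \<noteq> j" "k \<noteq> j0"
    then show "g $ k < r m $ k" using gzeq Cz unfolding C_def by simp
  qed
qed

lemma lower_bound:
  fixes r :: "nat \<Rightarrow> real^'n"
  assumes adm: "admissible rho r"
  shows "card (generators (record_region rho r)) \<ge> (CARD('n) - 1) * rho + 1"
proof -
  define R where "R = record_region rho r"
  obtain j0 :: 'n where True by blast
  have ex: "\<forall>m j. \<exists>g. m < rho \<longrightarrow> j \<noteq> j0 \<longrightarrow> g \<in> generators R \<and> g $ j = r m $ j \<and>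
     (\<forall>k. k \<noteq> j0 \<longrightarrow> 0 < g $ k \<longrightarrow> (\<exists>i<rho. g $ k = r i $ k \<and> r m $ j0 \<le> r i $ j0)) \<and>
     (\<forall>k. k \<noteq> j \<longrightarrow> k \<noteq> j0 \<longrightarrow> g $ k < r m $ k)"
    using keyA[OF adm] unfolding R_def by blast
  obtain G where G: "\<forall>m j. m < rho \<longrightarrow> j \<noteq> j0 \<longrightarrow> G m j \<in> generators R \<and> G m j $ j = r m $ j \<and>
     (\<forall>k. k \<noteq> j0 \<longrightarrow> 0 < G m j $ k \<longrightarrow> (\<exists>i<rho. G m j $ k = r i $ k \<and> r m $ j0 \<le> r i $ j0)) \<and>
     (\<forall>k. k \<noteq> j \<longrightarrow> k \<noteq> j0 \<longrightarrow> G m j $ k < r m $ k)"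
    using ex by metis
  have Gg: "G m j \<in> generators R" and Gj: "G m j $ j = r m $ j"
    and Gw: "\<And>k. k \<noteq> j0 \<Longrightarrow> 0 < G m j $ k \<Longrightarrow> \<exists>i<rho. G m j $ k = r i $ k \<and> r m $ j0 \<le> r i $ j0"
    and Gl: "\<And>k. k \<noteq> j \<Longrightarrow> k \<noteq> j0 \<Longrightarrow> G m j $ k < r m $ k"
    if "m < rho" "j \<noteq> j0" for m j using G that by blast+
  define D where "D = {..<rho} \<times> (UNIV - {j0})"
  define Gp where "Gp = (\<lambda>p. G (fst p) (snd p))"
  have ord: "r m $ j0 \<le> r m' $ j0" if hyp: "m < rho" "m' < rho" "j \<noteq> j0" "j' \<noteq> j0" "G m j = G m' j'" for m m' j j'
  proof -
    have pos: "0 < G m j $ j'" using Gj[OF that(2,4)] adm_rin[OF adm that(2)] that(5) by simp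
    obtain i where i: "i < rho" "G m j $ j' = r i $ j'" "r m $ j0 \<le> r i $ j0" using Gw[OF hyp(1,3) hyp(4) pos] by blast
    have "r i $ j' = r m' $ j'" using i(2) that(5) Gj[OF that(2,4)] by simp
    then have "i = m'" using adm_dist[OF adm i(1) that(2), of j' j'] by auto
    then show ?thesis using i(3) by simp
  qed
  have inj: "inj_on Gp D"
  proof (rule inj_onI)
    fix p q assume p: "p \<in> D" and q: "q \<in> D" and e: "Gp p = Gp q"
    obtain m j m' j' where pq: "p = (m, j)" "q = (m', j')" by (cases p, cases q) auto
    have c: "m < rho" "m' < rho" "j \<noteq> j0" "j' \<noteq> j0" using p q pq D_def by auto
    have e': "G m j = G m' j'" using e pq Gp_def by simp
    show "p = q"
    proof (cases "m = m'")
      case True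
      show ?thesis
      proof (rule ccontr)
        assume "p \<noteq> q"
        then have "j \<noteq> j'" using pq True by simp
        then have "G m j $ j' < r m $ j'" using Gl[OF c(1,3)] c(4) by simp
        moreover have "G m' j' $ j' = r m' $ j'" using Gj[OF c(2,4)] .
        ultimately show False using e' True by simp
      qed
    next
      case False
      have "r m $ j0 \<le> r m' $ j0" using ord c e' by blast
      moreover have "r m' $ j0 \<le> r m $ j0" using ord c e'[symmetric] by blast
      ultimately have "r m $ j0 = r m' $ j0" by simp
      then show ?thesis using adm_dist[OF adm c(1,2), of j0 j0] False by simp
    qed
  qed
  define M where "M = Max (insert 0 ((\<lambda>i. r i $ j0) ` {..<rho}))"
  have M1: "M < 1" unfolding M_def using Max0_less[of "{..<rho}" "\<lambda>i. r i $ j0" 1] adm_rin[OF adm] by auto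
  have M0: "0 \<le> M" unfolding M_def using Max0_nonneg by blast
  have Mge: "r i $ j0 \<le> M" if "i < rho" for i unfolding M_def using Max0_ge[of "{..<rho}" i "\<lambda>i. r i $ j0"] that by auto
  define c where "c = (\<chi> l. if l = j0 then M else (0::real))"
  have cR: "c \<in> R" unfolding R_def mem_R
  proof (intro conjI allI impI)
    fix l show "0 \<le> c $ l" "c $ l < 1" unfolding c_def using M0 M1 by auto
  next
    fix i assume "i < rho" then show "\<exists>l. r i $ l \<le> c $ l" using Mge unfolding c_def by (intro exI[of _ j0]) auto
  qed
  obtain g0 where g0: "g0 \<in> generators R" "vle g0 c" using gen_below cR unfolding R_def by blast
  have g0R: "g0 \<in> R" using g0(1) unfolding gen_iff by auto
  have g0z: "g0 $ l = 0" if "l \<noteq> j0" for l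
  proof -
    have "0 \<le> g0 $ l" using g0R unfolding R_def mem_R by auto
    moreover have "g0 $ l \<le> c $ l" using g0(2) unfolding vle_def by blast
    ultimately show ?thesis using that unfolding c_def by simp
  qed
  have notin: "g0 \<notin> Gp ` D"
  proof
    assume "g0 \<in> Gp ` D"
    then obtain p where p: "p \<in> D" "g0 = Gp p" by blast
    obtain m j where "p = (m, j)" by (cases p) auto
    then have mj: "m < rho" "j \<noteq> j0" "g0 = G m j" using p unfolding D_def Gp_def by auto
    then have "g0 $ j = r m $ j" using Gj by simp
    then show False using g0z[OF mj(2)] adm_rin[OF adm mj(1), of j] by simp
  qed
  have sub: "insert g0 (Gp ` D) \<subseteq> generators R"
  proof
    fix x assume "x \<in> insert g0 (Gp ` D)"
    then show "x \<in> generators R"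
    proof
      assume "x \<in> Gp ` D"
      then obtain p where p: "p \<in> D" "x = Gp p" by blast
      obtain m j where "p = (m, j)" by (cases p) auto
      then show ?thesis using p Gg unfolding D_def Gp_def by auto
    qed (use g0(1) in simp)
  qed
  have cardD: "card D = rho * (CARD('n) - 1)" unfolding D_def by (simp add: card_cartesian_product card_Diff_singleton)
  have "card (insert g0 (Gp ` D)) = (CARD('n) - 1) * rho + 1"
    using notin card_image[OF inj] cardD by (simp add: D_def)
  moreover have "card (insert g0 (Gp ` D)) \<le> card (generators R)"
    using card_mono[OF _ sub] finite_gens R_def by blast
  ultimately show ?thesis unfolding R_def by simp
qed

lemma gen_witness: "x \<in> generators (record_region rho r) \<Longrightarrow> 0 < x $ k \<Longrightarrow>
   \<exists>i<rho. x $ k = r i $ k \<and> (\<forall>l. l \<noteq> k \<longrightarrow> x $ l < r i $ l)"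
  using witness[of x rho r k] unfolding gen_iff by blast

lemma upper_gen:
  fixes r :: "nat \<Rightarrow> real^'n" and j1 :: 'n
  assumes rin: "\<And>i l. i < rho \<Longrightarrow> 0 < r i $ l"
  and inc: "\<And>i i' k. i < rho \<Longrightarrow> i' < rho \<Longrightarrow> k \<noteq> j1 \<Longrightarrow> (r i $ k < r i' $ k \<longleftrightarrow> i < i')"
  and dec: "\<And>i i'. i < rho \<Longrightarrow> i' < rho \<Longrightarrow> (r i $ j1 < r i' $ j1 \<longleftrightarrow> i' < i)"
  and x: "x \<in> generators (record_region rho r)"
  shows "x = (\<chi> l. if l = j1 \<and> 0 < rho then r 0 $ j1 else 0) \<or>
         (\<exists>i k. i < rho \<and> k \<noteq> j1 \<and>
            x = (\<chi> l. if l = k then r i $ k else if l = j1 \<and> i + 1 < rho then r (i + 1) $ j1 else 0))"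
proof -
  have xR: "x \<in> record_region rho r" using x unfolding gen_iff by auto
  have nn: "0 \<le> x $ l" for l using xR unfolding mem_R by auto
  have cov: "\<exists>l. r i $ l \<le> x $ l" if "i < rho" for i using xR that unfolding mem_R by auto
  note W = gen_witness[OF x]
  show ?thesis
  proof (cases "\<forall>k. k \<noteq> j1 \<longrightarrow> x $ k = 0")
    case True
    have "x = (\<chi> l. if l = j1 \<and> 0 < rho then r 0 $ j1 else 0)"
    proof (cases "x $ j1 = 0")
      case z: True
      have "rho = 0"
      proof (rule ccontr)
        assume "rho \<noteq> 0"
        then obtain l where "r 0 $ l \<le> x $ l" using cov by blast
        moreover have "x $ l = 0" using True z by (cases "l = j1") auto
        ultimately show False using rin[of 0 l] \<open>rho \<noteq> 0\<close> by simp
      qed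
      moreover have "x $ l = 0" for l using True z by (cases "l = j1") auto
      ultimately show ?thesis by (simp add: vec_eq_iff)
    next
      case False
      then have "0 < x $ j1" using nn[of j1] by simp
      then obtain i2 where i2: "i2 < rho" "x $ j1 = r i2 $ j1" using W by blast
      have "i2 = 0"
      proof (rule ccontr)
        assume "i2 \<noteq> 0"
        obtain l where l: "r 0 $ l \<le> x $ l" using cov i2(1) by blast
        show False
        proof (cases "l = j1")
          case True
          have "r i2 $ j1 < r 0 $ j1" using dec[OF i2(1), of 0] i2(1) \<open>i2 \<noteq> 0\<close> by simp
          then show False using l True i2(2) by simp
        next
          case False
          then show False using l \<open>\<forall>k. k \<noteq> j1 \<longrightarrow> x $ k = 0\<close> rin[of 0 l] i2(1) by force
        qed
      qed
      then show ?thesis using True i2 by (auto simp: vec_eq_iff)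
    qed
    then show ?thesis by blast
  next
    case False
    then obtain k where k: "k \<noteq> j1" "x $ k \<noteq> 0" by blast
    then have "0 < x $ k" using nn[of k] by simp
    then obtain i where i: "i < rho" "x $ k = r i $ k" "\<forall>l. l \<noteq> k \<longrightarrow> x $ l < r i $ l" using W by blast
    have oth: "x $ k' = 0" if "k' \<noteq> j1" "k' \<noteq> k" for k'
    proof (rule ccontr)
      assume "x $ k' \<noteq> 0"
      then have "0 < x $ k'" using nn[of k'] by simp
      then obtain i' where i': "i' < rho" "x $ k' = r i' $ k'" "\<forall>l. l \<noteq> k' \<longrightarrow> x $ l < r i' $ l" using W by blast
      have "x $ k < r i' $ k" using i'(3) that(2) by auto
      then have "i < i'" using inc[OF i(1) i'(1) k(1)] i(2) by simp
      have "x $ k' < r i $ k'" using i(3) that(2) by auto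
      then have "i' < i" using inc[OF i'(1) i(1) that(1)] i'(2) by simp
      then show False using \<open>i < i'\<close> by simp
    qed
    have xj1: "x $ j1 = (if i + 1 < rho then r (i + 1) $ j1 else 0)"
    proof (cases "i + 1 < rho")
      case True
      obtain l where l: "r (i+1) $ l \<le> x $ l" using cov True by blast
      have "l = j1"
      proof (rule ccontr)
        assume "l \<noteq> j1"
        show False
        proof (cases "l = k")
          case True
          have "r i $ k < r (i+1) $ k" using inc[OF i(1) \<open>i+1 < rho\<close> k(1)] by simp
          then show False using l True i(2) by simp
        next
          case False
          then show False using l oth[OF \<open>l \<noteq> j1\<close> False] rin[OF \<open>i+1 < rho\<close>, of l] by simp
        qed
      qed
      then have le: "r (i+1) $ j1 \<le> x $ j1" using l by simp
      then have "0 < x $ j1" using rin[OF True, of j1] by simp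
      then obtain i2 where i2: "i2 < rho" "x $ j1 = r i2 $ j1" using W by blast
      have "\<not> (i + 1 < i2)" using dec[OF i2(1) True] le i2(2) by simp
      moreover have "x $ j1 < r i $ j1" using i(3) k(1) by auto
      then have "i < i2" using dec[OF i2(1) i(1)] i2(2) by simp
      ultimately have "i2 = i + 1" by simp
      then show ?thesis using i2 True by simp
    next
      case False
      show ?thesis
      proof (rule ccontr)
        assume "x $ j1 \<noteq> (if i + 1 < rho then r (i + 1) $ j1 else 0)"
        then have "0 < x $ j1" using False nn[of j1] by simp
        then obtain i2 where i2: "i2 < rho" "x $ j1 = r i2 $ j1" using W by blast
        have "x $ j1 < r i $ j1" using i(3) k(1) by auto
        then have "i < i2" using dec[OF i2(1) i(1)] i2(2) by simp
        then show False using i2(1) False by simp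
      qed
    qed
    have "x = (\<chi> l. if l = k then r i $ k else if l = j1 \<and> i + 1 < rho then r (i + 1) $ j1 else 0)"
      unfolding vec_eq_iff
    proof
      fix l
      show "x $ l = (\<chi> l. if l = k then r i $ k else if l = j1 \<and> i + 1 < rho then r (i + 1) $ j1 else 0) $ l"
        using i(2) xj1 oth[of l] k(1) by (cases "l = k"; cases "l = j1") auto
    qed
    then show ?thesis using i(1) k(1) by blast
  qed
qed

lemma construction:
  assumes hyp: "2 \<le> CARD('n) \<or> rho \<le> 1"
  shows "\<exists>r :: nat \<Rightarrow> real^'n. admissible rho r \<and>
           card (generators (record_region rho r)) \<le> (CARD('n) - 1) * rho + 1"
proof -
  define d where "d = CARD('n)"
  have d0: "0 < d" unfolding d_def by simp
  obtain f where f: "bij_betw f (UNIV :: 'n set) {0..<d}" using ex_bij_betw_finite_nat[of "UNIV :: 'n set"] d_def by auto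
  have fk: "f k < d" for k using f unfolding bij_betw_def by auto
  have finj: "f k = f k' \<Longrightarrow> k = k'" for k k' using f unfolding bij_betw_def inj_on_def by auto
  obtain j1 :: 'n where True by blast
  define a where "a i k = (if k = j1 then rho - 1 - i else i)" for i and k :: 'n
  define c where "c i k = d * a i k + f k" for i k
  define r :: "nat \<Rightarrow> real^'n" where "r i = (\<chi> k. real (c i k + 1) / real (d * rho + 1))" for i
  have abound: "a i k + 1 \<le> rho" if "i < rho" for i k using that unfolding a_def by auto
  have cb: "c i k < d * rho" if "i < rho" for i k
  proof -
    have "d * (a i k + 1) \<le> d * rho" using abound[OF that] by (rule mult_le_mono2)
    then show ?thesis unfolding c_def using fk[of k] by (simp add: algebra_simps)
  qed
  have rk: "r i $ k = real (c i k + 1) / real (d * rho + 1)" for i k unfolding r_def by simp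
  have rlt: "r i $ k < r i' $ k' \<longleftrightarrow> c i k < c i' k'" for i i' k k'
  proof -
    have p: "0 < 1 + real d * real rho" using d0 by (simp add: add_pos_nonneg)
    show ?thesis unfolding rk using p by (simp add: divide_less_cancel)
  qed
  have rin: "0 < r i $ k \<and> r i $ k < 1" if "i < rho" for i k
  proof -
    have "real (c i k + 1) < real (d * rho + 1)" using cb[OF that, of k] by (simp only: of_nat_less_iff)
    then show ?thesis unfolding rk by simp
  qed
  have cinj: "i = i' \<and> k = k'" if "i < rho" "i' < rho" "c i k = c i' k'" for i i' k k'
  proof -
    have "c i k mod d = f k" "c i' k' mod d = f k'" unfolding c_def using fk by auto
    then have "k = k'" using that(3) finj by metis
    have "c i k div d = a i k" "c i' k' div d = a i' k'" unfolding c_def using fk d0 by auto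
    then have "a i k = a i' k" using that(3) \<open>k = k'\<close> by metis
    then have "i = i'" using that(1,2) unfolding a_def by (auto split: if_splits)
    then show ?thesis using \<open>k = k'\<close> by simp
  qed
  have inc: "(r i $ k < r i' $ k \<longleftrightarrow> i < i')" if "i < rho" "i' < rho" "k \<noteq> j1" for i i' k
    unfolding rlt c_def a_def using that d0 by simp
  have dec: "(r i $ j1 < r i' $ j1 \<longleftrightarrow> i' < i)" if "i < rho" "i' < rho" for i i'
    unfolding rlt c_def a_def using that d0 by auto
  have adm: "admissible rho r" unfolding admissible_def
  proof (intro conjI allI impI)
    fix i and j :: 'n assume "i < rho" then show "0 < r i $ j" "r i $ j < 1" using rin by auto
  next
    fix i i' assume ii: "i < rho" "i' < rho" "i \<noteq> i'"
    then have "2 \<le> CARD('n)" using hyp by auto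
    then obtain k :: 'n where k: "k \<noteq> j1"
      by (metis card_2_iff' ex_card numeral_le_iff semiring_norm(69) semiring_norm(72))
    show "\<not> vle (r i) (r i')"
    proof (cases "i < i'")
      case True
      then have "r i' $ j1 < r i $ j1" using dec[OF ii(2,1)] by simp
      then show ?thesis unfolding vle_def by (meson not_le)
    next
      case False
      then have "i' < i" using ii(3) by simp
      then have "r i' $ k < r i $ k" using inc[OF ii(2,1) k] by simp
      then show ?thesis unfolding vle_def by (meson not_le)
    qed
  next
    fix i i' and j j' :: 'n assume ii: "i < rho" "i' < rho" "(i, j) \<noteq> (i', j')"
    show "r i $ j \<noteq> r i' $ j'"
    proof
      assume "r i $ j = r i' $ j'"
      moreover have "0 < 1 + real d * real rho" using d0 by (simp add: add_pos_nonneg)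
      ultimately have "c i j = c i' j'" unfolding rk by (simp add: divide_cancel_right)
      then show False using cinj[OF ii(1,2)] ii(3) by simp
    qed
  qed
  define e0 where "e0 = (\<chi> l. if l = j1 \<and> 0 < rho then r 0 $ j1 else (0::real))"
  define P where "P p = (\<chi> l. if l = snd p then r (fst p) $ snd p
        else if l = j1 \<and> fst p + 1 < rho then r (fst p + 1) $ j1 else 0)" for p
  define D where "D = {..<rho} \<times> (UNIV - {j1})"
  have sub: "generators (record_region rho r) \<subseteq> insert e0 (P ` D)"
  proof
    fix x assume x: "x \<in> generators (record_region rho r)"
    have "x = e0 \<or> (\<exists>i k. i < rho \<and> k \<noteq> j1 \<and>
            x = (\<chi> l. if l = k then r i $ k else if l = j1 \<and> i + 1 < rho then r (i + 1) $ j1 else 0))"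
      unfolding e0_def by (rule upper_gen[OF _ inc dec x]) (use rin in auto)
    then show "x \<in> insert e0 (P ` D)"
    proof
      assume "\<exists>i k. i < rho \<and> k \<noteq> j1 \<and>
            x = (\<chi> l. if l = k then r i $ k else if l = j1 \<and> i + 1 < rho then r (i + 1) $ j1 else 0)"
      then obtain i k where ik: "i < rho" "k \<noteq> j1" 
        "x = (\<chi> l. if l = k then r i $ k else if l = j1 \<and> i + 1 < rho then r (i + 1) $ j1 else 0)" by blast
      then have "x = P (i, k)" "(i, k) \<in> D" unfolding P_def D_def by auto
      then show ?thesis by blast
    qed simp
  qed
  have finD: "finite D" unfolding D_def by simp
  have "card (insert e0 (P ` D)) \<le> Suc (card (P ` D))" using finD by (simp add: card_insert_if)
  also have "\<dots> \<le> Suc (card D)" using card_image_le[OF finD, of P] by simp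
  also have "card D = rho * (CARD('n) - 1)" unfolding D_def by (simp add: card_cartesian_product card_Diff_singleton)
  finally have "card (generators (record_region rho r)) \<le> (CARD('n) - 1) * rho + 1"
    using card_mono[OF _ sub] finD by (simp add: mult.commute)
  then show ?thesis using adm by blast
qed

theorem theoremT:
  fixes rho :: nat
  shows "(\<forall>r :: nat \<Rightarrow> real^'n. admissible rho r \<longrightarrow>
            card (generators (record_region rho r)) \<ge> (CARD('n) - 1) * rho + 1)
       \<and> ((\<exists>r :: nat \<Rightarrow> real^'n. admissible rho r) \<longrightarrow>
            (\<exists>r :: nat \<Rightarrow> real^'n. admissible rho r \<and>
               card (generators (record_region rho r)) = (CARD('n) - 1) * rho + 1))"
proof (intro conjI allI impI)
  fix r :: "nat \<Rightarrow> real^'n" assume "admissible rho r"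
  then show "card (generators (record_region rho r)) \<ge> (CARD('n) - 1) * rho + 1" by (rule lower_bound)
next
  assume ex: "\<exists>r :: nat \<Rightarrow> real^'n. admissible rho r"
  have hyp: "2 \<le> CARD('n) \<or> rho \<le> 1"
  proof (rule ccontr)
    assume "\<not> (2 \<le> CARD('n) \<or> rho \<le> 1)"
    then have c1: "CARD('n) = 1" and rho2: "2 \<le> rho"
    proof -
      have a: "0 < CARD('n)" by simp
      have b: "\<not> 2 \<le> CARD('n)" "\<not> rho \<le> 1" using \<open>\<not> (2 \<le> CARD('n) \<or> rho \<le> 1)\<close> by auto
      show "CARD('n) = 1" using a b(1) by linarith
      show "2 \<le> rho" using b(2) by linarith
    qed
    obtain r :: "nat \<Rightarrow> real^'n" where adm: "admissible rho r" using ex by blast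
    obtain u :: 'n where u: "UNIV = {u}" using c1 card_1_singletonE by blast
    have "\<not> vle (r 0) (r 1)" "\<not> vle (r 1) (r 0)" using adm_incomp[OF adm] rho2 by auto
    then obtain j j' where "r 1 $ j < r 0 $ j" "r 0 $ j' < r 1 $ j'" unfolding vle_def by (auto simp: not_le)
    moreover have "j = u" "j' = u" using u by auto
    ultimately show False by simp
  qed
  obtain r :: "nat \<Rightarrow> real^'n" where adm: "admissible rho r"
    and le: "card (generators (record_region rho r)) \<le> (CARD('n) - 1) * rho + 1"
    using construction[OF hyp] by blast
  have "card (generators (record_region rho r)) \<ge> (CARD('n) - 1) * rho + 1" using lower_bound[OF adm] .
  then show "\<exists>r :: nat \<Rightarrow> real^'n. admissible rho r \<and>
               card (generators (record_region rho r)) = (CARD('n) - 1) * rho + 1"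
    using adm le by (intro exI[of _ r]) auto
qed

end
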